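(* Let $M$ be a finite-horizon MDP and $\mathcal D$ an arbitrary offline dataset of trajectories. For every policy $\pi$, $$p_{out}^{M,\mathcal D}(\pi)\le H\Big(\|\rho_\pi^M(s)-\rho_\pi^{M_{\mathcal D}}(s)\|_1+\|\rho_\pi^M(s,a,r)-\rho_\pi^{M_{\mathcal D}}(s,a,r)\|_1\Big).$$
   Context: $M=(\mathcal S,\mathcal A,\mathcal R,H,P,R)$ is a finite-horizon MDP with finite spaces, fixed initial state $s_0$, state space partitioned into disjoint layers $\mathcal S_h$ by timestep. Visitation distributions: $\rho_\pi(s_0)=1/H$, $\rho_\pi(s)=\sum_{\tilde s\in\mathcal S_{h-1},\tilde a}\rho_\pi(\tilde s)\pi(\tilde a\mid\tilde s)P(s\mid\tilde s,\tilde a)$ for $s\in\mathcal S_h$, $h>0$, and $\rho_\pi(s,a,r)=\rho_\pi(s)\pi(a\mid s)R(r\mid s,a)$; the $\ell_1$ norms are over all states, resp. all triples $(s,a,r)$. $M_{\mathcal D}$ is the dataset-induced MDP with empirical transitions $N(s,a,s')/N(s,a)$ and rewards $N(s,a,r)/N(s,a)$ when $N(s,a)>0$ and $0$ otherwise ($N$ counts occurrences in $\mathcal D$). $p_{out}^{M,\mathcal D}(\pi)=\sum_{\tau_H}p_\pi^M(\tau_H)\,\mathbf 1[\exists t: s_t\notin\mathcal D\text{ or }(s_t,a_t,r_t)\notin\mathcal D]$ is the probability that an $H$-step trajectory $\tau_H=(s_0,a_0,r_0,\dots,s_{H-1},a_{H-1},r_{H-1})$ generated by $\pi$ in $M$ contains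 a state or a state-action-reward triple not appearing in $\mathcal D$. *)

theory Defs
  imports Complex_Main
begin

definition st_of :: "'s \<times> 'a \<times> 'r \<Rightarrow> 's" where "st_of x = fst x"
definition ac_of :: "'s \<times> 'a \<times> 'r \<Rightarrow> 'a" where "ac_of x = fst (snd x)"
definition rw_of :: "'s \<times> 'a \<times> 'r \<Rightarrow> 'r" where "rw_of x = snd (snd x)"

definition traj_prob ::
  "'s \<Rightarrow> nat \<Rightarrow> ('s \<Rightarrow> 'a \<Rightarrow> 's \<Rightarrow> real) \<Rightarrow> ('s \<Rightarrow> 'a \<Rightarrow> 'r \<Rightarrow> real)
    \<Rightarrow> ('s \<Rightarrow> 'a \<Rightarrow> real) \<Rightarrow> ('s \<times> 'a \<times> 'r) list \<Rightarrow> real" where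
  "traj_prob s0 H P R pol \<tau> =
     (if length \<tau> = H \<and> 0 < H \<and> st_of (\<tau> ! 0) = s0 then
        (\<Prod>t<H. pol (st_of (\<tau>!t)) (ac_of (\<tau>!t)) * R (st_of (\<tau>!t)) (ac_of (\<tau>!t)) (rw_of (\<tau>!t)))
        * (\<Prod>t<H - 1. P (st_of (\<tau>!t)) (ac_of (\<tau>!t)) (st_of (\<tau>!Suc t)))
      else 0)"

definition D_triples :: "('s \<times> 'a \<times> 'r) list list \<Rightarrow> ('s \<times> 'a \<times> 'r) set" where
  "D_triples D = (\<Union>\<tau>\<in>set D. set \<tau>)"

definition D_states :: "('s \<times> 'a \<times> 'r) list list \<Rightarrow> 's set" where
  "D_states D = st_of ` D_triples D"

definition p_out ::
  "'s \<Rightarrow> nat \<Rightarrow> ('s \<Rightarrow> 'a \<Rightarrow> 's \<Rightarrow> real) \<Rightarrow> ('s \<Rightarrow> 'a \<Rightarrow> 'r \<Rightarrow> real)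
    \<Rightarrow> ('s \<Rightarrow> 'a \<Rightarrow> real) \<Rightarrow> ('s \<times> 'a \<times> 'r) list list \<Rightarrow> real" where
  "p_out s0 H P R pol D =
     (\<Sum>\<tau>\<in>{\<tau>. length \<tau> = H}. traj_prob s0 H P R pol \<tau> *
        (if \<exists>t<H. st_of (\<tau>!t) \<notin> D_states D \<or> \<tau>!t \<notin> D_triples D then 1 else 0))"

definition N_sa :: "('s \<times> 'a \<times> 'r) list list \<Rightarrow> 's \<Rightarrow> 'a \<Rightarrow> nat" where
  "N_sa D s a = (\<Sum>\<tau>\<leftarrow>D. length (filter (\<lambda>x. st_of x = s \<and> ac_of x = a) \<tau>))"

definition N_sar :: "('s \<times> 'a \<times> 'r) list list \<Rightarrow> 's \<Rightarrow> 'a \<Rightarrow> 'r \<Rightarrow> nat" where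
  "N_sar D s a r = (\<Sum>\<tau>\<leftarrow>D. count_list \<tau> (s, a, r))"

definition N_sas :: "('s \<times> 'a \<times> 'r) list list \<Rightarrow> 's \<Rightarrow> 'a \<Rightarrow> 's \<Rightarrow> nat" where
  "N_sas D s a s' = (\<Sum>\<tau>\<leftarrow>D. card {i. Suc i < length \<tau> \<and> st_of (\<tau>!i) = s \<and>
       ac_of (\<tau>!i) = a \<and> st_of (\<tau>!Suc i) = s'})"

definition P_D :: "('s \<times> 'a \<times> 'r) list list \<Rightarrow> 's \<Rightarrow> 'a \<Rightarrow> 's \<Rightarrow> real" where
  "P_D D s a s' = (if 0 < N_sa D s a then real (N_sas D s a s') / real (N_sa D s a) else 0)"

definition R_D :: "('s \<times> 'a \<times> 'r) list list \<Rightarrow> 's \<Rightarrow> 'a \<Rightarrow> 'r \<Rightarrow> real" where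
  "R_D D s a r = (if 0 < N_sa D s a then real (N_sar D s a r) / real (N_sa D s a) else 0)"

primrec rho_layer ::
  "('s \<Rightarrow> nat) \<Rightarrow> 's \<Rightarrow> nat \<Rightarrow> ('s \<Rightarrow> 'a \<Rightarrow> 's \<Rightarrow> real) \<Rightarrow> ('s \<Rightarrow> 'a \<Rightarrow> real)
     \<Rightarrow> nat \<Rightarrow> 's \<Rightarrow> real" where
  "rho_layer lay s0 H P pol 0 = (\<lambda>s. if s = s0 then 1 / real H else 0)"
| "rho_layer lay s0 H P pol (Suc h) = (\<lambda>s. \<Sum>s'\<in>{x. lay x = h}. \<Sum>a\<in>UNIV.
      rho_layer lay s0 H P pol h s' * pol s' a * P s' a s)"

definition rho_s ::
  "('s \<Rightarrow> nat) \<Rightarrow> 's \<Rightarrow> nat \<Rightarrow> ('s \<Rightarrow> 'a \<Rightarrow> 's \<Rightarrow> real) \<Rightarrow> ('s \<Rightarrow> 'a \<Rightarrow> real) \<Rightarrow> 's \<Rightarrow> real" where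
  "rho_s lay s0 H P pol s = rho_layer lay s0 H P pol (lay s) s"

definition rho_sar ::
  "('s \<Rightarrow> nat) \<Rightarrow> 's \<Rightarrow> nat \<Rightarrow> ('s \<Rightarrow> 'a \<Rightarrow> 's \<Rightarrow> real) \<Rightarrow> ('s \<Rightarrow> 'a \<Rightarrow> 'r \<Rightarrow> real)
     \<Rightarrow> ('s \<Rightarrow> 'a \<Rightarrow> real) \<Rightarrow> 's \<Rightarrow> 'a \<Rightarrow> 'r \<Rightarrow> real" where
  "rho_sar lay s0 H P R pol s a r = rho_s lay s0 H P pol s * pol s a * R s a r"

definition finite_mdp ::
  "('s::finite \<Rightarrow> nat) \<Rightarrow> 's \<Rightarrow> nat \<Rightarrow> ('s \<Rightarrow> 'a::finite \<Rightarrow> 's \<Rightarrow> real)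
     \<Rightarrow> ('s \<Rightarrow> 'a \<Rightarrow> 'r::finite \<Rightarrow> real) \<Rightarrow> bool" where
  "finite_mdp lay s0 H P R \<longleftrightarrow>
     0 < H \<and> lay s0 = 0 \<and> (\<forall>s. lay s < H) \<and>
     (\<forall>s a s'. 0 \<le> P s a s') \<and>
     (\<forall>s a. Suc (lay s) < H \<longrightarrow> (\<Sum>s'\<in>UNIV. P s a s') = 1) \<and>
     (\<forall>s a s'. Suc (lay s) < H \<longrightarrow> P s a s' \<noteq> 0 \<longrightarrow> lay s' = Suc (lay s)) \<and>
     (\<forall>s a r. 0 \<le> R s a r) \<and> (\<forall>s a. (\<Sum>r\<in>UNIV. R s a r) = 1)"

definition is_policy :: "('s::finite \<Rightarrow> 'a::finite \<Rightarrow> real) \<Rightarrow> bool" where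
  "is_policy pol \<longleftrightarrow> (\<forall>s a. 0 \<le> pol s a) \<and> (\<forall>s. (\<Sum>a\<in>UNIV. pol s a) = 1)"

end

theory Submission
  imports Defs
begin

lemma finite_len: "finite {\<tau>::('x::finite) list. length \<tau> = n}"
  using finite_lists_length_eq[of "UNIV::'x set" n] by simp

lemma sum_snoc:
  fixes f :: "('x::finite) list \<Rightarrow> real"
  shows "(\<Sum>\<tau>\<in>{\<tau>. length \<tau> = Suc n}. f \<tau>) = (\<Sum>\<tau>\<in>{\<tau>. length \<tau> = n}. \<Sum>y\<in>UNIV. f (\<tau> @ [y]))"
proof -
  have inj: "inj_on (\<lambda>(\<tau>, y). \<tau> @ [y]) ({\<tau>::'x list. length \<tau> = n} \<times> UNIV)"
    by (auto simp: inj_on_def)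
  have img: "(\<lambda>(\<tau>, y). \<tau> @ [y]) ` ({\<tau>::'x list. length \<tau> = n} \<times> UNIV) = {\<tau>. length \<tau> = Suc n}"
  proof (auto simp: image_def)
    fix xs :: "'x list" assume "length xs = Suc n"
    then show "\<exists>a. length a = n \<and> (\<exists>b. xs = a @ [b])"
      by (cases xs rule: rev_cases) auto
  qed
  have "(\<Sum>\<tau>\<in>{\<tau>. length \<tau> = n}. \<Sum>y\<in>UNIV. f (\<tau> @ [y])) = (\<Sum>(\<tau>,y)\<in>{\<tau>. length \<tau> = n} \<times> UNIV. f (\<tau> @ [y]))"
    by (rule sum.cartesian_product)
  also have "\<dots> = (\<Sum>\<tau>\<in>{\<tau>. length \<tau> = Suc n}. f \<tau>)"
    using sum.reindex[OF inj, of f] img by (simp add: case_prod_unfold)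
  finally show ?thesis by simp
qed

lemma sum_triple:
  fixes f :: "('s::finite \<times> 'a::finite \<times> 'r::finite) \<Rightarrow> real"
  shows "(\<Sum>z\<in>UNIV. f z) = (\<Sum>s\<in>UNIV. \<Sum>a\<in>UNIV. \<Sum>r\<in>UNIV. f (s, a, r))"
  by (simp add: sum.cartesian_product UNIV_Times_UNIV[symmetric] del: UNIV_Times_UNIV)

lemma sum_ind:
  fixes g :: "'x::finite \<Rightarrow> real"
  shows "(\<Sum>z\<in>UNIV. (if v = z then 1 else 0) * g z) = g v"
proof -
  have "(\<lambda>z. (if v = z then 1 else 0) * g z) = (\<lambda>z. if v = z then g v else 0)" by auto
  then show ?thesis by (simp only:) simp
qed

context
  fixes lay :: "'s::finite \<Rightarrow> nat" and s0 :: 's and H :: nat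
    and P :: "'s \<Rightarrow> 'a::finite \<Rightarrow> 's \<Rightarrow> real"
    and R :: "'s \<Rightarrow> 'a \<Rightarrow> 'r::finite \<Rightarrow> real"
    and pol :: "'s \<Rightarrow> 'a \<Rightarrow> real"
  assumes mdp: "finite_mdp lay s0 H P R"
    and pol: "is_policy pol"
begin

definition w :: "'s \<times> 'a \<times> 'r \<Rightarrow> real" where
  "w x = pol (st_of x) (ac_of x) * R (st_of x) (ac_of x) (rw_of x)"

definition pp :: "nat \<Rightarrow> ('s \<times> 'a \<times> 'r) list \<Rightarrow> real" where
  "pp n \<tau> = (if st_of (\<tau>!0) = s0 then (\<Prod>t<n. w (\<tau>!t)) *
     (\<Prod>t<n - 1. P (st_of (\<tau>!t)) (ac_of (\<tau>!t)) (st_of (\<tau>!Suc t))) else 0)"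

lemma Hpos: "0 < H" and lay0: "lay s0 = 0" and layH: "lay s < H"
  and Pnn: "0 \<le> P s a s'" and Psum: "Suc (lay s) < H \<Longrightarrow> (\<Sum>s'\<in>UNIV. P s a s') = 1"
  and Play: "Suc (lay s) < H \<Longrightarrow> P s a s' \<noteq> 0 \<Longrightarrow> lay s' = Suc (lay s)"
  and Rnn: "0 \<le> R s a r" and Rsum: "(\<Sum>r\<in>UNIV. R s a r) = 1"
  and polnn: "0 \<le> pol s a" and polsum: "(\<Sum>a\<in>UNIV. pol s a) = 1"
  using mdp pol unfolding finite_mdp_def is_policy_def by auto

lemma w_nn: "0 \<le> w x"
  unfolding w_def by (simp add: Rnn polnn)

lemma pp_nn: "0 \<le> pp n \<tau>"
  unfolding pp_def by (auto intro!: mult_nonneg_nonneg prod_nonneg w_nn Pnn)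

lemma pp_one: "pp (Suc 0) [y] = (if st_of y = s0 then w y else 0)"
  unfolding pp_def by simp

lemma pp_snoc:
  assumes "length \<tau> = n" "1 \<le> n"
  shows "pp (Suc n) (\<tau> @ [y]) = pp n \<tau> * P (st_of (last \<tau>)) (ac_of (last \<tau>)) (st_of y) * w y"
proof -
  obtain m where m: "n = Suc m" using assms(2) by (cases n) auto
  have n0: "(\<tau> @ [y]) ! 0 = \<tau> ! 0" using assms by (simp add: nth_append)
  have A: "(\<Prod>t<Suc n. w ((\<tau> @ [y])!t)) = (\<Prod>t<n. w (\<tau>!t)) * w y"
    using assms(1) by (simp add: nth_append)
  have B: "(\<Prod>t<Suc n - 1. P (st_of ((\<tau> @ [y])!t)) (ac_of ((\<tau> @ [y])!t)) (st_of ((\<tau> @ [y])!Suc t)))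
      = (\<Prod>t<n - 1. P (st_of (\<tau>!t)) (ac_of (\<tau>!t)) (st_of (\<tau>!Suc t))) * P (st_of (last \<tau>)) (ac_of (last \<tau>)) (st_of y)"
  proof -
    have "(\<Prod>t<Suc n - 1. P (st_of ((\<tau> @ [y])!t)) (ac_of ((\<tau> @ [y])!t)) (st_of ((\<tau> @ [y])!Suc t)))
       = (\<Prod>t<Suc m. P (st_of ((\<tau> @ [y])!t)) (ac_of ((\<tau> @ [y])!t)) (st_of ((\<tau> @ [y])!Suc t)))"
      using m by simp
    also have "\<dots> = (\<Prod>t<m. P (st_of ((\<tau> @ [y])!t)) (ac_of ((\<tau> @ [y])!t)) (st_of ((\<tau> @ [y])!Suc t)))
        * P (st_of ((\<tau> @ [y])!m)) (ac_of ((\<tau> @ [y])!m)) (st_of ((\<tau> @ [y])!Suc m))"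
      by simp
    also have "(\<Prod>t<m. P (st_of ((\<tau> @ [y])!t)) (ac_of ((\<tau> @ [y])!t)) (st_of ((\<tau> @ [y])!Suc t)))
       = (\<Prod>t<n - 1. P (st_of (\<tau>!t)) (ac_of (\<tau>!t)) (st_of (\<tau>!Suc t)))"
      using assms(1) m by (intro prod.cong) (auto simp: nth_append)
    also have "(\<tau> @ [y])!m = last \<tau>" using assms(1) m by (cases \<tau> rule: rev_cases) (auto simp: nth_append)
    also have "(\<tau> @ [y])!Suc m = y" using assms(1) m by (simp add: nth_append)
    finally show ?thesis .
  qed
  show ?thesis unfolding pp_def n0 A B by simp
qed

lemma pp_lay:
  "length \<tau> = n \<Longrightarrow> 1 \<le> n \<Longrightarrow> n \<le> H \<Longrightarrow> pp n \<tau> \<noteq> 0 \<Longrightarrow> lay (st_of (last \<tau>)) = n - 1"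
proof (induction n arbitrary: \<tau>)
  case 0 then show ?case by simp
next
  case (Suc n)
  obtain \<sigma> y where t: "\<tau> = \<sigma> @ [y]" using Suc.prems(1) by (cases \<tau> rule: rev_cases) auto
  have ls: "length \<sigma> = n" using Suc.prems(1) t by simp
  show ?case
  proof (cases "n = 0")
    case True
    then have "\<tau> = [y]" using t ls by simp
    then show ?thesis using Suc.prems(4) True by (simp add: pp_one lay0 split: if_splits)
  next
    case False
    then have n1: "1 \<le> n" by simp
    have eq: "pp (Suc n) \<tau> = pp n \<sigma> * P (st_of (last \<sigma>)) (ac_of (last \<sigma>)) (st_of y) * w y"
      using pp_snoc[OF ls n1] t by simp
    then have "pp n \<sigma> \<noteq> 0" "P (st_of (last \<sigma>)) (ac_of (last \<sigma>)) (st_of y) \<noteq> 0"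
      using Suc.prems(4) by auto
    moreover have "lay (st_of (last \<sigma>)) = n - 1"
      using Suc.IH[OF ls n1] Suc.prems(3) calculation(1) by simp
    ultimately have "lay (st_of y) = Suc (n - 1)"
      using Play[of "st_of (last \<sigma>)" "ac_of (last \<sigma>)" "st_of y"] Suc.prems(3) n1 by simp
    then show ?thesis using t n1 by simp
  qed
qed

lemma rho0: "t < H \<Longrightarrow> lay s \<noteq> t \<Longrightarrow> rho_layer lay s0 H P pol t s = 0"
proof (induction t arbitrary: s)
  case 0 then show ?case using lay0 by auto
next
  case (Suc t)
  have "P s' a s = 0" if "lay s' = t" for s' a
    using Play[of s' a s] that Suc.prems by auto
  then show ?case by simp
qed

lemma sum_layer:
  assumes "n < H"
  shows "(\<Sum>s\<in>UNIV. rho_layer lay s0 H P pol n s * g s) = (\<Sum>s\<in>{x. lay x = n}. rho_layer lay s0 H P pol n s * g s)"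
  by (rule sum.mono_neutral_right) (auto simp: rho0 assms)

lemma fwd:
  "1 \<le> n \<Longrightarrow> n \<le> H \<Longrightarrow> (\<Sum>\<tau>\<in>{\<tau>. length \<tau> = n}. pp n \<tau> * (if last \<tau> = x then 1 else 0))
     = real H * rho_layer lay s0 H P pol (n - 1) (st_of x) * w x"
proof (induction n arbitrary: x)
  case 0 then show ?case by simp
next
  case (Suc n)
  show ?case
  proof (cases "n = 0")
    case True
    have "(\<Sum>\<tau>\<in>{\<tau>. length \<tau> = Suc 0}. pp (Suc 0) \<tau> * (if last \<tau> = x then 1 else 0))
        = (\<Sum>y\<in>UNIV. pp (Suc 0) [y] * (if y = x then 1 else 0))"
      by (subst sum_snoc) simp
    also have "\<dots> = pp (Suc 0) [x]"
      using sum_ind[of x "\<lambda>y. pp (Suc 0) [y]"] by (simp add: mult.commute eq_commute)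
    finally show ?thesis using True Hpos by (simp add: pp_one)
  next
    case False
    then have n1: "1 \<le> n" by simp
    let ?rho = "rho_layer lay s0 H P pol"
    have "(\<Sum>\<tau>\<in>{\<tau>. length \<tau> = Suc n}. pp (Suc n) \<tau> * (if last \<tau> = x then 1 else 0))
      = (\<Sum>\<tau>\<in>{\<tau>. length \<tau> = n}. \<Sum>y\<in>UNIV. pp n \<tau> * P (st_of (last \<tau>)) (ac_of (last \<tau>)) (st_of y) * w y * (if y = x then 1 else 0))"
      using n1 by (subst sum_snoc) (auto intro!: sum.cong simp: pp_snoc[OF refl])
    also have "\<dots> = (\<Sum>\<tau>\<in>{\<tau>. length \<tau> = n}. pp n \<tau> * P (st_of (last \<tau>)) (ac_of (last \<tau>)) (st_of x) * w x)"
    proof (rule sum.cong, simp)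
      fix \<tau> :: "('s \<times> 'a \<times> 'r) list"
      show "(\<Sum>y\<in>UNIV. pp n \<tau> * P (st_of (last \<tau>)) (ac_of (last \<tau>)) (st_of y) * w y * (if y = x then 1 else 0))
         = pp n \<tau> * P (st_of (last \<tau>)) (ac_of (last \<tau>)) (st_of x) * w x"
        using sum_ind[of x "\<lambda>y. pp n \<tau> * P (st_of (last \<tau>)) (ac_of (last \<tau>)) (st_of y) * w y"]
        by (simp add: mult.commute eq_commute)
    qed
    also have "\<dots> = (\<Sum>\<tau>\<in>{\<tau>. length \<tau> = n}. \<Sum>z\<in>UNIV. pp n \<tau> * (if last \<tau> = z then 1 else 0) * (P (st_of z) (ac_of z) (st_of x) * w x))"
    proof (rule sum.cong, simp)
      fix \<tau> :: "('s \<times> 'a \<times> 'r) list"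
      show "pp n \<tau> * P (st_of (last \<tau>)) (ac_of (last \<tau>)) (st_of x) * w x
         = (\<Sum>z\<in>UNIV. pp n \<tau> * (if last \<tau> = z then 1 else 0) * (P (st_of z) (ac_of z) (st_of x) * w x))"
        using sum_ind[of "last \<tau>" "\<lambda>z. pp n \<tau> * (P (st_of z) (ac_of z) (st_of x) * w x)"]
        by (simp add: mult.assoc mult.left_commute)
    qed
    also have "\<dots> = (\<Sum>z\<in>UNIV. (\<Sum>\<tau>\<in>{\<tau>. length \<tau> = n}. pp n \<tau> * (if last \<tau> = z then 1 else 0)) * (P (st_of z) (ac_of z) (st_of x) * w x))"
      by (subst sum.swap) (simp add: sum_distrib_right)
    also have "\<dots> = (\<Sum>z\<in>UNIV. real H * ?rho (n - 1) (st_of z) * w z * (P (st_of z) (ac_of z) (st_of x) * w x))"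
      using Suc.IH n1 Suc.prems by simp
    also have "\<dots> = real H * w x * (\<Sum>s\<in>UNIV. \<Sum>a\<in>UNIV. \<Sum>r\<in>UNIV. ?rho (n - 1) s * pol s a * P s a (st_of x) * R s a r)"
      by (subst sum_triple) (simp add: sum_distrib_left w_def st_of_def ac_of_def rw_of_def mult_ac)
    also have "\<dots> = real H * w x * (\<Sum>s\<in>UNIV. ?rho (n - 1) s * (\<Sum>a\<in>UNIV. pol s a * P s a (st_of x)))"
      by (simp add: sum_distrib_left[symmetric] Rsum mult.assoc)
    also have "\<dots> = real H * w x * (\<Sum>s\<in>{x. lay x = n - 1}. ?rho (n - 1) s * (\<Sum>a\<in>UNIV. pol s a * P s a (st_of x)))"
      using sum_layer[of "n - 1"] Suc.prems by simp
    also have "\<dots> = real H * ?rho n (st_of x) * w x"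
    proof -
      have "?rho n (st_of x) = ?rho (Suc (n - 1)) (st_of x)" using n1 by simp
      then show ?thesis by (simp add: sum_distrib_left mult_ac)
    qed
    finally show ?thesis by simp
  qed
qed

lemma inner_one:
  assumes "Suc (lay s) < H"
  shows "(\<Sum>y\<in>UNIV. P s a (st_of y) * w y) = 1"
proof -
  have "(\<Sum>y\<in>UNIV. P s a (st_of y) * w y) = (\<Sum>s'\<in>UNIV. \<Sum>b\<in>UNIV. \<Sum>r\<in>UNIV. P s a s' * (pol s' b * R s' b r))"
    by (subst sum_triple) (simp add: w_def st_of_def ac_of_def rw_of_def)
  also have "\<dots> = (\<Sum>s'\<in>UNIV. P s a s' * (\<Sum>b\<in>UNIV. pol s' b * (\<Sum>r\<in>UNIV. R s' b r)))"
    by (simp add: sum_distrib_left)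
  also have "\<dots> = 1" using Psum[OF assms] by (simp add: Rsum polsum)
  finally show ?thesis .
qed

lemma ext:
  "t < n \<Longrightarrow> n \<le> H \<Longrightarrow> (\<Sum>\<tau>\<in>{\<tau>. length \<tau> = n}. pp n \<tau> * (if \<tau>!t = x then 1 else 0))
     = real H * rho_layer lay s0 H P pol t (st_of x) * w x"
proof (induction n)
  case 0 then show ?case by simp
next
  case (Suc n)
  show ?case
  proof (cases "t = n")
    case True
    have "(\<Sum>\<tau>\<in>{\<tau>. length \<tau> = Suc n}. pp (Suc n) \<tau> * (if \<tau>!t = x then 1 else 0))
       = (\<Sum>\<tau>\<in>{\<tau>. length \<tau> = Suc n}. pp (Suc n) \<tau> * (if last \<tau> = x then 1 else 0))"
    proof (rule sum.cong, simp)
      fix \<tau> :: "('s \<times> 'a \<times> 'r) list" assume "\<tau> \<in> {\<tau>. length \<tau> = Suc n}"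
      then have "\<tau>!t = last \<tau>" using True by (cases \<tau> rule: rev_cases) (auto simp: nth_append)
      then show "pp (Suc n) \<tau> * (if \<tau>!t = x then 1 else 0) = pp (Suc n) \<tau> * (if last \<tau> = x then 1 else 0)" by simp
    qed
    also have "\<dots> = real H * rho_layer lay s0 H P pol t (st_of x) * w x"
      using fwd[of "Suc n" x] Suc.prems True by simp
    finally show ?thesis .
  next
    case False
    then have tn: "t < n" using Suc.prems by simp
    then have n1: "1 \<le> n" by simp
    have "(\<Sum>\<tau>\<in>{\<tau>. length \<tau> = Suc n}. pp (Suc n) \<tau> * (if \<tau>!t = x then 1 else 0))
      = (\<Sum>\<tau>\<in>{\<tau>. length \<tau> = n}. \<Sum>y\<in>UNIV. pp n \<tau> * (if \<tau>!t = x then 1 else 0) * (P (st_of (last \<tau>)) (ac_of (last \<tau>)) (st_of y) * w y))"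
      using n1 tn by (subst sum_snoc) (auto intro!: sum.cong simp: pp_snoc[OF refl] nth_append mult_ac)
    also have "\<dots> = (\<Sum>\<tau>\<in>{\<tau>. length \<tau> = n}. pp n \<tau> * (if \<tau>!t = x then 1 else 0))"
    proof (rule sum.cong, simp)
      fix \<tau> :: "('s \<times> 'a \<times> 'r) list" assume "\<tau> \<in> {\<tau>. length \<tau> = n}"
      then have l: "length \<tau> = n" by simp
      show "(\<Sum>y\<in>UNIV. pp n \<tau> * (if \<tau>!t = x then 1 else 0) * (P (st_of (last \<tau>)) (ac_of (last \<tau>)) (st_of y) * w y))
         = pp n \<tau> * (if \<tau>!t = x then 1 else 0)"
      proof (cases "pp n \<tau> = 0")
        case True then show ?thesis by simp
      next
        case False
        have "lay (st_of (last \<tau>)) = n - 1" using pp_lay[OF l n1 _ False] Suc.prems by simp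
        then have "Suc (lay (st_of (last \<tau>))) < H" using Suc.prems n1 by simp
        from inner_one[OF this, of "ac_of (last \<tau>)"] show ?thesis
          by (simp add: sum_distrib_left[symmetric])
      qed
    qed
    also have "\<dots> = real H * rho_layer lay s0 H P pol t (st_of x) * w x"
      using Suc.IH tn Suc.prems by simp
    finally show ?thesis .
  qed
qed

lemma rho_nn: "0 \<le> rho_layer lay s0 H P pol t s"
  by (induction t arbitrary: s) (auto intro!: sum_nonneg mult_nonneg_nonneg Pnn polnn)

lemma rho_sum_t: "(\<Sum>t<H. rho_layer lay s0 H P pol t s) = rho_s lay s0 H P pol s"
proof -
  have "(\<Sum>t<H. rho_layer lay s0 H P pol t s) = (\<Sum>t<H. if lay s = t then rho_layer lay s0 H P pol t s else 0)"
    by (rule sum.cong) (auto simp: rho0)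
  also have "\<dots> = rho_s lay s0 H P pol s" using layH[of s] by (simp add: sum.delta rho_s_def)
  finally show ?thesis .
qed

lemma main:
  fixes D :: "('s \<times> 'a \<times> 'r) list list"
  shows "p_out s0 H P R pol D \<le> real H *
    ((\<Sum>s\<in>UNIV. \<bar>rho_s lay s0 H P pol s - rho_s lay s0 H (P_D D) pol s\<bar>)
     + (\<Sum>(s, a, r)\<in>UNIV. \<bar>rho_sar lay s0 H P R pol s a r - rho_sar lay s0 H (P_D D) (R_D D) pol s a r\<bar>))"
proof -
  define Dt where "Dt = D_triples D"
  define F where "F x = \<bar>rho_sar lay s0 H P R pol (st_of x) (ac_of x) (rw_of x)
       - rho_sar lay s0 H (P_D D) (R_D D) pol (st_of x) (ac_of x) (rw_of x)\<bar>" for x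
  let ?ind = "\<lambda>\<tau>::('s \<times> 'a \<times> 'r) list. (if \<exists>t<H. st_of (\<tau>!t) \<notin> D_states D \<or> \<tau>!t \<notin> D_triples D then 1 else 0) :: real"
  have "p_out s0 H P R pol D = (\<Sum>\<tau>\<in>{\<tau>. length \<tau> = H}. pp H \<tau> * ?ind \<tau>)"
    unfolding p_out_def
    by (rule sum.cong) (auto simp: traj_prob_def pp_def w_def Hpos)
  also have "\<dots> \<le> (\<Sum>\<tau>\<in>{\<tau>. length \<tau> = H}. pp H \<tau> * (\<Sum>t<H. if \<tau>!t \<notin> Dt then 1 else 0))"
  proof (rule sum_mono, rule mult_left_mono[OF _ pp_nn])
    fix \<tau> :: "('s \<times> 'a \<times> 'r) list"
    show "?ind \<tau> \<le> (\<Sum>t<H. if \<tau>!t \<notin> Dt then 1 else 0)"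
    proof (cases "\<exists>t<H. st_of (\<tau>!t) \<notin> D_states D \<or> \<tau>!t \<notin> D_triples D")
      case True
      then obtain t where t: "t < H" "\<tau>!t \<notin> Dt"
        unfolding Dt_def D_states_def by auto
      have "(1::real) = (if \<tau>!t \<notin> Dt then 1 else 0)" using t by simp
      also have "\<dots> \<le> (\<Sum>t<H. if \<tau>!t \<notin> Dt then 1 else 0)"
        by (rule member_le_sum) (use t in auto)
      finally show ?thesis using True by simp
    next
      case False show ?thesis unfolding if_not_P[OF False] by (simp add: sum_nonneg)
    qed
  qed
  also have "\<dots> = (\<Sum>t<H. \<Sum>x\<in>-Dt. \<Sum>\<tau>\<in>{\<tau>. length \<tau> = H}. pp H \<tau> * (if \<tau>!t = x then 1 else 0))"
  proof -
    have "\<And>\<tau> t. (if \<tau>!t \<notin> Dt then 1 else 0 :: real) = (\<Sum>x\<in>-Dt. if \<tau>!t = x then 1 else 0)"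
      by (simp add: sum.delta)
    then have "(\<Sum>\<tau>\<in>{\<tau>. length \<tau> = H}. pp H \<tau> * (\<Sum>t<H. if \<tau>!t \<notin> Dt then 1 else 0))
       = (\<Sum>\<tau>\<in>{\<tau>. length \<tau> = H}. \<Sum>t<H. \<Sum>x\<in>-Dt. pp H \<tau> * (if \<tau>!t = x then 1 else 0))"
      by (simp only: sum_distrib_left)
    also have "\<dots> = (\<Sum>t<H. \<Sum>\<tau>\<in>{\<tau>. length \<tau> = H}. \<Sum>x\<in>-Dt. pp H \<tau> * (if \<tau>!t = x then 1 else 0))"
      by (rule sum.swap)
    also have "\<dots> = (\<Sum>t<H. \<Sum>x\<in>-Dt. \<Sum>\<tau>\<in>{\<tau>. length \<tau> = H}. pp H \<tau> * (if \<tau>!t = x then 1 else 0))"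
      by (rule sum.cong, simp, rule sum.swap)
    finally show ?thesis .
  qed
  also have "\<dots> = (\<Sum>t<H. \<Sum>x\<in>-Dt. real H * rho_layer lay s0 H P pol t (st_of x) * w x)"
    by (intro sum.cong refl ext) auto
  also have "\<dots> = (\<Sum>x\<in>-Dt. real H * rho_s lay s0 H P pol (st_of x) * w x)"
    by (subst sum.swap) (simp add: sum_distrib_left[symmetric] sum_distrib_right[symmetric] rho_sum_t)
  also have "\<dots> = (\<Sum>x\<in>-Dt. real H * F x)"
  proof (rule sum.cong, simp)
    fix x assume "x \<in> -Dt"
    then have "N_sar D (st_of x) (ac_of x) (rw_of x) = 0"
      unfolding Dt_def D_triples_def N_sar_def
      by (cases x) (auto simp: st_of_def ac_of_def rw_of_def sum_list_eq_0_iff count_list_0_iff)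
    then have "R_D D (st_of x) (ac_of x) (rw_of x) = 0" by (simp add: R_D_def)
    moreover have "0 \<le> rho_s lay s0 H P pol (st_of x) * w x"
      by (simp add: rho_s_def rho_nn w_nn)
    ultimately show "real H * rho_s lay s0 H P pol (st_of x) * w x = real H * F x"
      by (simp add: F_def rho_sar_def w_def mult.assoc)
  qed
  also have "\<dots> \<le> (\<Sum>x\<in>UNIV. real H * F x)"
    by (rule sum_mono2) (auto simp: F_def)
  also have "\<dots> = real H * (\<Sum>(s, a, r)\<in>UNIV. \<bar>rho_sar lay s0 H P R pol s a r - rho_sar lay s0 H (P_D D) (R_D D) pol s a r\<bar>)"
    by (simp add: sum_distrib_left[symmetric] F_def case_prod_unfold st_of_def ac_of_def rw_of_def)
  also have "\<dots> \<le> real H *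
    ((\<Sum>s\<in>UNIV. \<bar>rho_s lay s0 H P pol s - rho_s lay s0 H (P_D D) pol s\<bar>)
     + (\<Sum>(s, a, r)\<in>UNIV. \<bar>rho_sar lay s0 H P R pol s a r - rho_sar lay s0 H (P_D D) (R_D D) pol s a r\<bar>))"
    by (rule mult_left_mono) (auto intro: sum_nonneg)
  finally show ?thesis .
qed

end

theorem lemma4:
  fixes lay :: "'s::finite \<Rightarrow> nat" and s0 :: 's and H :: nat
    and P :: "'s \<Rightarrow> 'a::finite \<Rightarrow> 's \<Rightarrow> real"
    and R :: "'s \<Rightarrow> 'a \<Rightarrow> 'r::finite \<Rightarrow> real"
    and pol :: "'s \<Rightarrow> 'a \<Rightarrow> real"
    and D :: "('s \<times> 'a \<times> 'r) list list"
  assumes "finite_mdp lay s0 H P R"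
    and "is_policy pol"
  shows "p_out s0 H P R pol D \<le> real H *
    ((\<Sum>s\<in>UNIV. \<bar>rho_s lay s0 H P pol s - rho_s lay s0 H (P_D D) pol s\<bar>)
     + (\<Sum>(s, a, r)\<in>UNIV. \<bar>rho_sar lay s0 H P R pol s a r - rho_sar lay s0 H (P_D D) (R_D D) pol s a r\<bar>))"
  using main[OF assms] .

end
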